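(* Let $\rho\in(-1,1)$, $\Sigma=\begin{pmatrix}1&\rho\\ \rho&1\end{pmatrix}$, let $X=(X_1,X_2)$ and $Y=(Y_1,Y_2)$ be independent with $X,Y\sim\mathrm{N}(0,\Sigma)$, and let $Z_1=X_1/Y_1$, $Z_2=X_2/Y_2$. Writing $a=(1+z_1^2)(1+z_2^2)$ and $b=1+z_1z_2$, the joint density of $(Z_1,Z_2)$ is $$f^\rho_{Z_1,Z_2}(z_1,z_2)=\frac{1-\rho^2}{\pi^2}\,\frac{1}{a-\rho^2b^2}+\frac{1-\rho^2}{\pi^2}\,\frac{\rho\, b}{(a-\rho^2 b^2)^{3/2}}\,\sin^{-1}\!\Big(\frac{\rho\, b}{\sqrt{1+z_1^2}\,\sqrt{1+z_2^2}}\Big).$$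
   Context: $\mathrm{N}(0,\Sigma)$ denotes the centered bivariate normal distribution with covariance matrix $\Sigma$; $\sin^{-1}$ is the principal branch of arcsine. *)

theory Defs
  imports "HOL-Probability.Probability"
begin

text \<open>Density of the centered bivariate normal distribution N(0, Sigma) with
  Sigma = [[1, rho], [rho, 1]], |rho| < 1 (so Sigma is nonsingular):
  f(x,y) = 1/(2 pi sqrt(det Sigma)) * exp(-(1/2) (x,y) Sigma^-1 (x,y)^T).\<close>
definition binormal_density :: "real \<Rightarrow> real \<times> real \<Rightarrow> real" where
  "binormal_density \<rho> p =
     (let x = fst p; y = snd p in
      1 / (2 * pi * sqrt (1 - \<rho>\<^sup>2)) *
      exp (- (x\<^sup>2 - 2 * \<rho> * x * y + y\<^sup>2) / (2 * (1 - \<rho>\<^sup>2))))"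

definition ratio_density :: "real \<Rightarrow> real \<times> real \<Rightarrow> real" where
  "ratio_density \<rho> z =
     (let z1 = fst z; z2 = snd z;
          a = (1 + z1\<^sup>2) * (1 + z2\<^sup>2); b = 1 + z1 * z2 in
      (1 - \<rho>\<^sup>2) / pi\<^sup>2 * (1 / (a - \<rho>\<^sup>2 * b\<^sup>2))
      + (1 - \<rho>\<^sup>2) / pi\<^sup>2 * (\<rho> * b / (a - \<rho>\<^sup>2 * b\<^sup>2) powr (3/2))
        * arcsin (\<rho> * b / (sqrt (1 + z1\<^sup>2) * sqrt (1 + z2\<^sup>2))))"

end

theory Submission
  imports Defs "HOL-Real_Asymp.Real_Asymp"
begin

lemma nn_split_half:
  fixes f :: "real \<Rightarrow> real"
  assumes [measurable]: "f \<in> borel_measurable borel" and f0: "f 0 = 0"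
  shows "(\<integral>\<^sup>+x. ennreal (f x) \<partial>lborel) =
     (\<integral>\<^sup>+x. ennreal (f x) * indicator {0..} x \<partial>lborel) + (\<integral>\<^sup>+x. ennreal (f (-x)) * indicator {0..} x \<partial>lborel)"
proof -
  have "(\<integral>\<^sup>+x. ennreal (f x) \<partial>lborel) =
     (\<integral>\<^sup>+x. ennreal (f x) * indicator {0..} x + ennreal (f x) * indicator {..0} x \<partial>lborel)"
    by (intro nn_integral_cong) (auto simp: f0 split: split_indicator)
  also have "\<dots> = (\<integral>\<^sup>+x. ennreal (f x) * indicator {0..} x \<partial>lborel) + (\<integral>\<^sup>+x. ennreal (f x) * indicator {..0} x \<partial>lborel)"
    by (rule nn_integral_add) auto
  also have "(\<integral>\<^sup>+x. ennreal (f x) * indicator {..0} x \<partial>lborel) = (\<integral>\<^sup>+x. ennreal (f (-x)) * indicator {0..} x \<partial>lborel)"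
    by (subst nn_integral_real_affine[where c="-1" and t=0]) (auto intro!: nn_integral_cong split: split_indicator)
  finally show ?thesis .
qed

lemma gauss3_half:
  fixes c :: real assumes c: "c > 0"
  shows "(\<integral>\<^sup>+x. ennreal (x^3 * exp (-(c*x^2)/2)) * indicator {0..} x \<partial>lborel) = ennreal (2 / c^2)"
proof -
  let ?F = "\<lambda>y::real. -(y^2/c + 2/c^2) * exp (-(c*y^2)/2)"
  have "(\<integral>\<^sup>+x. ennreal (x^3 * exp (-(c*x^2)/2)) * indicator {0..} x \<partial>lborel) = ennreal (0 - ?F 0)"
  proof (rule nn_integral_FTC_atLeast)
    show "(\<lambda>x::real. x^3 * exp (-(c*x^2)/2)) \<in> borel_measurable borel" by measurable
    show "(?F \<longlongrightarrow> 0) at_top" using c by real_asymp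
    fix x :: real assume "0 \<le> x"
    then show "0 \<le> x^3 * exp (-(c*x^2)/2)" by simp
    show "(?F has_real_derivative x^3 * exp (-(c*x^2)/2)) (at x)"
      using c by (auto intro!: derivative_eq_intros simp: field_simps power2_eq_square power3_eq_cube)
  qed
  then show ?thesis using c by simp
qed

lemma gauss3:
  fixes c :: real assumes c: "c > 0"
  shows "(\<integral>\<^sup>+x. ennreal (\<bar>x\<bar>^3 * exp (-(c*x^2)/2)) \<partial>lborel) = ennreal (4 / c^2)"
proof -
  have e: "(\<integral>\<^sup>+x. ennreal (\<bar>x\<bar>^3 * exp (-(c*x^2)/2)) * indicator {0..} x \<partial>lborel)
     = (\<integral>\<^sup>+x. ennreal (x^3 * exp (-(c*x^2)/2)) * indicator {0..} x \<partial>lborel)"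
    by (intro nn_integral_cong) (auto split: split_indicator)
  have m: "(\<lambda>x::real. \<bar>x\<bar>^3 * exp (-(c*x^2)/2)) \<in> borel_measurable borel" by measurable
  have "(\<integral>\<^sup>+x. ennreal (\<bar>x\<bar>^3 * exp (-(c*x^2)/2)) \<partial>lborel) = ennreal (2 / c^2) + ennreal (2 / c^2)"
  proof -
    have e2: "(\<integral>\<^sup>+x. ennreal (\<bar>-x\<bar>^3 * exp (-(c*(-x)^2)/2)) * indicator {0..} x \<partial>lborel) = ennreal (2 / c^2)"
      using e gauss3_half[OF c] by simp
    show ?thesis by (subst nn_split_half[OF m]) (simp, simp only: e2 e gauss3_half[OF c])
  qed
  also have "\<dots> = ennreal (4 / c^2)" using c by (simp add: ennreal_plus[symmetric] del: ennreal_plus)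
  finally show ?thesis .
qed

lemma FTC_le_lim:
  fixes F f :: "real \<Rightarrow> real"
  assumes f: "\<And>x. a \<le> x \<Longrightarrow> DERIV F x :> f x"
  assumes nonneg: "\<And>x. a \<le> x \<Longrightarrow> 0 \<le> f x"
  assumes lim: "(F \<longlongrightarrow> T) at_top"
  shows "F a \<le> T"
proof -
  have "a \<le> x \<Longrightarrow> F a \<le> F x" for x
    using f nonneg by (intro DERIV_nonneg_imp_nondecreasing[of a x F]) (auto intro: order_trans)
  then show ?thesis
    by (intro tendsto_lowerbound[OF lim]) (auto simp: eventually_at_top_linorder)
qed

lemma rat_half:
  fixes a b g :: real
  assumes g: "g > 0" and D: "a*g - b^2 > 0"
  shows "(\<integral>\<^sup>+t. ennreal (t / (g*t^2 - 2*b*t + a)^2) * indicator {0..} t \<partial>lborel)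
     = ennreal (1/(2*(a*g-b^2)) + b/(2*(a*g-b^2) * sqrt(a*g-b^2)) * (pi/2 + arctan(b/sqrt(a*g-b^2))))"
    and "0 \<le> 1/(2*(a*g-b^2)) + b/(2*(a*g-b^2) * sqrt(a*g-b^2)) * (pi/2 + arctan(b/sqrt(a*g-b^2)))"
proof -
  define D where "D = a*g - b^2"
  have D0: "D > 0" using D by (simp add: D_def)
  have sD: "sqrt D > 0" "sqrt D ^ 2 = D" using D0 by auto
  have a0: "a > 0"
  proof -
    have "a*g > 0" using D by (smt (verit) zero_le_power2)
    then show ?thesis using g by (simp add: zero_less_mult_iff)
  qed
  have pg: "g*(g*t^2 - 2*b*t + a) = (g*t-b)^2 + D" for t by (simp add: D_def power2_eq_square algebra_simps)
  have pp: "g*t^2 - 2*b*t + a > 0" for t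
  proof -
    have "g*(g*t^2 - 2*b*t + a) > 0" unfolding pg using D0 by (smt (verit) zero_le_power2)
    then show ?thesis using g by (simp add: zero_less_mult_iff)
  qed
  let ?p = "\<lambda>t. g*t^2 - 2*b*t + a"
  let ?F = "\<lambda>t. (b*t - a)/(2*D*(g*t^2 - 2*b*t + a)) + b/(2*D * sqrt D) * arctan ((g*t-b)/sqrt D)"
  have lim: "(?F \<longlongrightarrow> b/(2*D * sqrt D) * (pi/2)) at_top"
  proof -
    have "(?F \<longlongrightarrow> b * pi / (4 * (D * root 2 D))) at_top" using D0 g by real_asymp
    then show ?thesis by (simp add: sqrt_def)
  qed
  have der: "(?F has_real_derivative x / (g*x^2 - 2*b*x + a)^2) (at x)" for x
    proof -
      have px: "?p x \<noteq> 0" using pp[of x] by simp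
      have d1: "((\<lambda>t. (b*t - a)/(2*D*?p t)) has_real_derivative (b*(2*D*?p x) - (b*x-a)*((2*g*x-2*b)*(2*D)))/((2*D*?p x)*(2*D*?p x))) (at x)"
        using px D0 by (auto intro!: derivative_eq_intros simp: power2_eq_square)
      have d2: "((\<lambda>t. arctan ((g*t-b)/sqrt D)) has_real_derivative inverse(1 + ((g*x-b)/sqrt D)^2) * (g/sqrt D)) (at x)"
        by (rule DERIV_arctan[THEN DERIV_chain2]) (use D0 in \<open>auto intro!: derivative_eq_intros simp: field_simps\<close>)
      have "(?F has_real_derivative (b*(2*D*?p x) - (b*x-a)*((2*g*x-2*b)*(2*D)))/((2*D*?p x)*(2*D*?p x)) + b/(2*D * sqrt D) * (inverse(1 + ((g*x-b)/sqrt D)^2) * (g/sqrt D))) (at x)"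
        by (intro DERIV_add DERIV_cmult d1 d2)
      moreover have "(b*(2*D*?p x) - (b*x-a)*((2*g*x-2*b)*(2*D)))/((2*D*?p x)*(2*D*?p x)) + b/(2*D * sqrt D) * (inverse(1 + ((g*x-b)/sqrt D)^2) * (g/sqrt D)) = x / (?p x)^2"
      proof -
        have q: "1 + ((g*x-b)/sqrt D)^2 = g * ?p x / D" using sD D0 pg[of x] by (simp add: field_simps power_divide)
        have sD2: "sqrt D * sqrt D = D" using D0 by simp
        have t1: "b/(2*D * sqrt D) * (inverse(1 + ((g*x-b)/sqrt D)^2) * (g/sqrt D)) = b / (2*D*?p x)"
        proof -
          have gen: "\<And>r P. r > 0 \<Longrightarrow> P \<noteq> 0 \<Longrightarrow> b/(2*r^2 * r) * (inverse(g*P/r^2) * (g/r)) = b/(2*r^2*P)"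
            using g by (simp add: field_simps power2_eq_square)
          show ?thesis unfolding q using gen[of "sqrt D" "?p x"] sD px by simp
        qed
        have gen2: "\<And>P. P \<noteq> 0 \<Longrightarrow> (b*(2*D*P) - (2*b*P - 2*D*x)*(2*D))/((2*D*P)*(2*D*P)) + b/(2*D*P) = x/P^2"
          using D0 by (simp add: field_simps power2_eq_square)
        have e: "(b*x-a)*((2*g*x-2*b)*(2*D)) = (2*b*?p x - 2*D*x)*(2*D)" by (simp add: D_def algebra_simps power2_eq_square)
        show ?thesis unfolding t1 e by (rule gen2[OF px])
      qed
      ultimately show ?thesis by simp
    qed
  have nn: "\<And>x::real. 0 \<le> x \<Longrightarrow> 0 \<le> x / (g*x^2 - 2*b*x + a)^2" by simp
  have I: "(\<integral>\<^sup>+t. ennreal (t / (g*t^2 - 2*b*t + a)^2) * indicator {0..} t \<partial>lborel) = ennreal (b/(2*D * sqrt D) * (pi/2) - ?F 0)"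
    by (rule nn_integral_FTC_atLeast[OF _ der nn lim]) measurable
  have le: "?F 0 \<le> b/(2*D * sqrt D) * (pi/2)" by (rule FTC_le_lim[OF der nn lim])
  have val:  "b/(2*D * sqrt D) * (pi/2) - ?F 0 = 1/(2*D) + b/(2*D * sqrt D) * (pi/2 + arctan(b/sqrt D))"
    using a0 D0 by (simp add: field_simps arctan_minus)
  show "(\<integral>\<^sup>+t. ennreal (t / (g*t^2 - 2*b*t + a)^2) * indicator {0..} t \<partial>lborel)
     = ennreal (1/(2*(a*g-b^2)) + b/(2*(a*g-b^2) * sqrt(a*g-b^2)) * (pi/2 + arctan(b/sqrt(a*g-b^2))))"
    using I val by (simp add: D_def)
  show "0 \<le> 1/(2*(a*g-b^2)) + b/(2*(a*g-b^2) * sqrt(a*g-b^2)) * (pi/2 + arctan(b/sqrt(a*g-b^2)))"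
    using le val by (simp add: D_def)
qed

lemma quad_pos:
  fixes a b g t :: real
  assumes g: "g > 0" and D: "a*g - b^2 > 0"
  shows "g*t^2 - 2*b*t + a > 0"
proof -
  have "g*(g*t^2 - 2*b*t + a) = (g*t-b)^2 + (a*g - b^2)" by (simp add: power2_eq_square algebra_simps)
  then have "g*(g*t^2 - 2*b*t + a) > 0" using D by (smt (verit) zero_le_power2)
  then show ?thesis using g by (simp add: zero_less_mult_iff)
qed

lemma rat_full:
  fixes a b g :: real
  assumes g: "g > 0" and D: "a*g - b^2 > 0"
  shows "(\<integral>\<^sup>+t. ennreal (\<bar>t\<bar> / (g*t^2 - 2*b*t + a)^2) \<partial>lborel)
     = ennreal (1/(a*g-b^2) + b/((a*g-b^2) * sqrt(a*g-b^2)) * arctan(b/sqrt(a*g-b^2)))"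
proof -
  define D where "D = a*g - b^2"
  have D0: "D > 0" using D by (simp add: D_def)
  have m: "(\<lambda>t::real. \<bar>t\<bar> / (g*t^2 - 2*b*t + a)^2) \<in> borel_measurable borel" by measurable
  have e1: "(\<integral>\<^sup>+t. ennreal (\<bar>t\<bar> / (g*t^2 - 2*b*t + a)^2) * indicator {0..} t \<partial>lborel)
      = ennreal (1/(2*D) + b/(2*D * sqrt D) * (pi/2 + arctan(b/sqrt D)))"
    using rat_half[OF g D] unfolding D_def[symmetric]
    by (subst nn_integral_cong[where v="\<lambda>t. ennreal (t / (g*t^2 - 2*b*t + a)^2) * indicator {0..} t"]) (auto split: split_indicator)
  have e2: "(\<integral>\<^sup>+t. ennreal (\<bar>-t\<bar> / (g*(-t)^2 - 2*b*(-t) + a)^2) * indicator {0..} t \<partial>lborel)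
      = ennreal (1/(2*D) + (-b)/(2*D * sqrt D) * (pi/2 + arctan((-b)/sqrt D)))"
  proof -
    have D': "a*g - (-b)^2 > 0" using D by simp
    show ?thesis
      using rat_half[OF g D'] unfolding D_def[symmetric] power2_minus
      by (subst nn_integral_cong[where v="\<lambda>t. ennreal (t / (g*t^2 - 2*(-b)*t + a)^2) * indicator {0..} t"]) (auto split: split_indicator)
  qed
  have n1: "0 \<le> 1/(2*D) + b/(2*D * sqrt D) * (pi/2 + arctan(b/sqrt D))"
    using rat_half(2)[OF g D] unfolding D_def .
  have n2: "0 \<le> 1/(2*D) + (-b)/(2*D * sqrt D) * (pi/2 + arctan((-b)/sqrt D))"
    using rat_half(2)[OF g, of a "-b"] D unfolding D_def by simp
  have "(\<integral>\<^sup>+t. ennreal (\<bar>t\<bar> / (g*t^2 - 2*b*t + a)^2) \<partial>lborel)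
     = ennreal (1/(2*D) + b/(2*D * sqrt D) * (pi/2 + arctan(b/sqrt D))) + ennreal (1/(2*D) + (-b)/(2*D * sqrt D) * (pi/2 + arctan((-b)/sqrt D)))"
    by (subst nn_split_half[OF m]) (simp, simp only: e1 e2)
  also have "\<dots> = ennreal (1/(2*D) + b/(2*D * sqrt D) * (pi/2 + arctan(b/sqrt D)) + (1/(2*D) + (-b)/(2*D * sqrt D) * (pi/2 + arctan((-b)/sqrt D))))"
    using n1 n2 by (simp add: ennreal_plus[symmetric] del: ennreal_plus)
  also have "1/(2*D) + b/(2*D * sqrt D) * (pi/2 + arctan(b/sqrt D)) + (1/(2*D) + (-b)/(2*D * sqrt D) * (pi/2 + arctan((-b)/sqrt D)))
     = 1/D + b/(D * sqrt D) * arctan(b/sqrt D)"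
    using D0 by (simp add: field_simps arctan_minus)
  finally show ?thesis by (simp add: D_def)
qed

lemma gauss_key:
  fixes a b g :: real
  assumes g: "g > 0" and D: "a*g - b^2 > 0"
  shows "(\<integral>\<^sup>+y1. \<integral>\<^sup>+y2. ennreal (\<bar>y1*y2\<bar> * exp (-(a*y1^2 - 2*b*y1*y2 + g*y2^2)/2)) \<partial>lborel \<partial>lborel)
     = ennreal (4 * (1/(a*g-b^2) + b/((a*g-b^2) * sqrt(a*g-b^2)) * arctan(b/sqrt(a*g-b^2))))"
proof -
  let ?p = "\<lambda>t. g*t^2 - 2*b*t + a"
  have s1: "(\<integral>\<^sup>+y2. ennreal (\<bar>y1*y2\<bar> * exp (-(a*y1^2 - 2*b*y1*y2 + g*y2^2)/2)) \<partial>lborel)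
      = (\<integral>\<^sup>+t. ennreal (\<bar>t\<bar> * (\<bar>y1\<bar>^3 * exp (-(?p t * y1^2)/2))) \<partial>lborel)" for y1
  proof (cases "y1 = 0")
    case True then show ?thesis by simp
  next
    case False
    have "(\<integral>\<^sup>+y2. ennreal (\<bar>y1*y2\<bar> * exp (-(a*y1^2 - 2*b*y1*y2 + g*y2^2)/2)) \<partial>lborel)
       = \<bar>y1\<bar> * (\<integral>\<^sup>+t. ennreal (\<bar>y1*(0 + y1*t)\<bar> * exp (-(a*y1^2 - 2*b*y1*(0 + y1*t) + g*(0 + y1*t)^2)/2)) \<partial>lborel)"
      by (rule nn_integral_real_affine[OF _ False]) measurable
    also have "\<dots> = (\<integral>\<^sup>+t. ennreal \<bar>y1\<bar> * ennreal (\<bar>y1*(0 + y1*t)\<bar> * exp (-(a*y1^2 - 2*b*y1*(0 + y1*t) + g*(0 + y1*t)^2)/2)) \<partial>lborel)"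
      by (rule nn_integral_cmult[symmetric]) measurable
    also have "\<dots> = (\<integral>\<^sup>+t. ennreal (\<bar>t\<bar> * (\<bar>y1\<bar>^3 * exp (-(?p t * y1^2)/2))) \<partial>lborel)"
    proof (intro nn_integral_cong)
      fix t :: real
      have "\<bar>y1\<bar> * (\<bar>y1*(0 + y1*t)\<bar> * exp (-(a*y1^2 - 2*b*y1*(0 + y1*t) + g*(0 + y1*t)^2)/2))
          = \<bar>t\<bar> * (\<bar>y1\<bar>^3 * exp (-(?p t * y1^2)/2))"
        by (simp add: abs_mult power2_eq_square power3_eq_cube algebra_simps)
      then show "ennreal \<bar>y1\<bar> * ennreal (\<bar>y1*(0 + y1*t)\<bar> * exp (-(a*y1^2 - 2*b*y1*(0 + y1*t) + g*(0 + y1*t)^2)/2))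
          = ennreal (\<bar>t\<bar> * (\<bar>y1\<bar>^3 * exp (-(?p t * y1^2)/2)))"
        by (simp add: ennreal_mult[symmetric])
    qed
    finally show ?thesis .
  qed
  have "(\<integral>\<^sup>+y1. \<integral>\<^sup>+y2. ennreal (\<bar>y1*y2\<bar> * exp (-(a*y1^2 - 2*b*y1*y2 + g*y2^2)/2)) \<partial>lborel \<partial>lborel)
     = (\<integral>\<^sup>+y1. \<integral>\<^sup>+t. ennreal (\<bar>t\<bar> * (\<bar>y1\<bar>^3 * exp (-(?p t * y1^2)/2))) \<partial>lborel \<partial>lborel)"
    by (simp only: s1)
  also have "\<dots> = (\<integral>\<^sup>+t. \<integral>\<^sup>+y1. ennreal (\<bar>t\<bar> * (\<bar>y1\<bar>^3 * exp (-(?p t * y1^2)/2))) \<partial>lborel \<partial>lborel)"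
    by (rule lborel_pair.Fubini') measurable
  also have "\<dots> = (\<integral>\<^sup>+t. ennreal 4 * ennreal (\<bar>t\<bar> / (?p t)^2) \<partial>lborel)"
  proof (intro nn_integral_cong)
    fix t :: real
    have pt: "?p t > 0" using quad_pos[OF g D] .
    have "(\<integral>\<^sup>+y1. ennreal (\<bar>t\<bar> * (\<bar>y1\<bar>^3 * exp (-(?p t * y1^2)/2))) \<partial>lborel)
       = (\<integral>\<^sup>+y1. ennreal \<bar>t\<bar> * ennreal (\<bar>y1\<bar>^3 * exp (-(?p t * y1^2)/2)) \<partial>lborel)"
      by (intro nn_integral_cong) (simp add: ennreal_mult)
    also have "\<dots> = ennreal \<bar>t\<bar> * (\<integral>\<^sup>+y1. ennreal (\<bar>y1\<bar>^3 * exp (-(?p t * y1^2)/2)) \<partial>lborel)"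
      by (rule nn_integral_cmult) measurable
    also have "\<dots> = ennreal \<bar>t\<bar> * ennreal (4 / (?p t)^2)"
      using gauss3[OF pt] by simp
    also have "\<dots> = ennreal 4 * ennreal (\<bar>t\<bar> / (?p t)^2)"
    proof -
      have "ennreal \<bar>t\<bar> * ennreal (4 / (?p t)^2) = ennreal (\<bar>t\<bar> * (4 / (?p t)^2))" by (rule ennreal_mult[symmetric]) auto
      moreover have "ennreal 4 * ennreal (\<bar>t\<bar> / (?p t)^2) = ennreal (4 * (\<bar>t\<bar> / (?p t)^2))" by (rule ennreal_mult[symmetric]) auto
      ultimately show ?thesis by simp
    qed
    finally show "(\<integral>\<^sup>+y1. ennreal (\<bar>t\<bar> * (\<bar>y1\<bar>^3 * exp (-(?p t * y1^2)/2))) \<partial>lborel) = ennreal 4 * ennreal (\<bar>t\<bar> / (?p t)^2)" .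
  qed
  also have "\<dots> = ennreal 4 * (\<integral>\<^sup>+t. ennreal (\<bar>t\<bar> / (?p t)^2) \<partial>lborel)"
    by (rule nn_integral_cmult) measurable
  also have "\<dots> = ennreal 4 * ennreal (1/(a*g-b^2) + b/((a*g-b^2) * sqrt(a*g-b^2)) * arctan(b/sqrt(a*g-b^2)))"
    using rat_full[OF g D] by simp
  also have "\<dots> = ennreal (4 * (1/(a*g-b^2) + b/((a*g-b^2) * sqrt(a*g-b^2)) * arctan(b/sqrt(a*g-b^2))))"
    by (rule ennreal_mult'[symmetric]) simp
  finally show ?thesis .
qed

lemma meas_binormal[measurable (raw)]:
  assumes [measurable]: "f \<in> borel_measurable M" "g \<in> borel_measurable M"
  shows "(\<lambda>x. binormal_density r (f x, g x)) \<in> borel_measurable M"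
  unfolding binormal_density_def Let_def by simp

lemma meas_binormal2[measurable]:
  "binormal_density r \<in> borel_measurable (borel \<Otimes>\<^sub>M borel)"
  "binormal_density r \<in> borel_measurable (lborel \<Otimes>\<^sub>M lborel)"
proof -
  have e: "binormal_density r = (\<lambda>p. binormal_density r (fst p, snd p))" by simp
  show "binormal_density r \<in> borel_measurable (borel \<Otimes>\<^sub>M borel)"
    by (subst e) measurable
  show "binormal_density r \<in> borel_measurable (lborel \<Otimes>\<^sub>M lborel)"
    by (subst e) measurable
qed

lemma ratio_alg:
  fixes \<rho> z1 z2 :: real
  assumes r: "-1 < \<rho>" "\<rho> < 1"
  defines "s \<equiv> 1 - \<rho>^2"
  defines "al \<equiv> (1 + z1^2) / s" and "be \<equiv> \<rho> * (1 + z1*z2) / s" and "ga \<equiv> (1 + z2^2) / s"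
  shows "ga > 0" "al*ga - be^2 > 0"
    "(1/(2*pi * sqrt s))^2 * (4 * (1/(al*ga-be^2) + be/((al*ga-be^2) * sqrt(al*ga-be^2)) * arctan(be/sqrt(al*ga-be^2))))
      = ratio_density \<rho> (z1, z2)"
proof -
  have "\<rho>^2 < 1" using r by (simp add: abs_square_less_1)
  then have s0: "s > 0" unfolding s_def by simp
  define a where "a = (1 + z1^2) * (1 + z2^2)"
  define b where "b = 1 + z1 * z2"
  define E where "E = a - \<rho>^2 * b^2"
  have Eeq: "E = (z1 - z2)^2 + s * b^2" unfolding E_def a_def b_def s_def by (simp add: power2_eq_square algebra_simps)
  have E0: "E > 0"
  proof (cases "z1 = z2")
    case True
    then have "b > 0" unfolding b_def by (simp add: add_pos_nonneg)
    then show ?thesis unfolding Eeq using s0 True by simp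
  next
    case False
    then have "(z1 - z2)^2 > 0" by simp
    then show ?thesis unfolding Eeq using s0 by (smt (verit) mult_nonneg_nonneg zero_le_power2)
  qed
  have a0: "a > 0" unfolding a_def by (simp add: add_pos_nonneg)
  show "ga > 0" unfolding ga_def using s0 by (simp add: add_pos_nonneg)
  have D: "al*ga - be^2 = E / s^2" unfolding al_def ga_def be_def E_def a_def b_def using s0
    by (simp add: field_simps power2_eq_square)
  then show "al*ga - be^2 > 0" using E0 s0 by simp
  have sD: "sqrt (al*ga - be^2) = sqrt E / s" unfolding D using s0 by (simp add: real_sqrt_divide)
  have bD: "be / sqrt (al*ga - be^2) = \<rho> * b / sqrt E" unfolding sD unfolding be_def b_def using s0 by simp
  have pw: "E powr (3/2) = E * sqrt E"
  proof -
    have "E powr (3/2) = E powr (1 + 1/2)" by simp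
    also have "\<dots> = E * E powr (1/2)" using E0 by (subst powr_add) simp
    finally show ?thesis using E0 by (simp add: powr_half_sqrt)
  qed
  have asn: "arcsin (\<rho> * b / (sqrt (1 + z1^2) * sqrt (1 + z2^2))) = arctan (\<rho> * b / sqrt E)"
  proof -
    define x where "x = \<rho> * b / sqrt a"
    have xe: "\<rho> * b / (sqrt (1 + z1^2) * sqrt (1 + z2^2)) = x" unfolding x_def a_def by (simp add: real_sqrt_mult)
    have 1: "1 - x^2 = E / a" unfolding x_def E_def using a0 by (simp add: field_simps power_divide)
    have "x^2 < 1" using 1 E0 a0 by (smt (verit) divide_pos_pos)
    then have xb: "-1 < x" "x < 1" by (auto simp: abs_square_less_1 abs_less_iff)
    have "x / sqrt (1 - x^2) = \<rho> * b / sqrt E" unfolding 1 unfolding x_def using a0 E0 by (simp add: real_sqrt_divide)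
    then show ?thesis unfolding xe using arcsin_arctan[OF xb] by simp
  qed
  have rd: "ratio_density \<rho> (z1, z2) = s/pi^2 * (1/E) + s/pi^2 * (\<rho> * b / (E * sqrt E)) * arctan (\<rho> * b / sqrt E)"
    unfolding ratio_density_def Let_def fst_conv snd_conv a_def[symmetric] b_def[symmetric] E_def[symmetric] s_def[symmetric] pw asn ..
  have gen: "\<And>q. q > 0 \<Longrightarrow> (1/(2*pi * sqrt s))^2 * (4 * (1/(q^2/s^2) + (\<rho> * b / s)/((q^2/s^2) * (q / s)) * T))
      = s/pi^2 * (1/q^2) + s/pi^2 * (\<rho> * b / (q^2 * q)) * T" for T
  proof -
    have k: "(1/(2*pi * sqrt s))^2 = 1/(4*pi^2 * s)" using s0 by (simp add: power_mult_distrib power_divide)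
    show "\<And>q. q > 0 \<Longrightarrow> (1/(2*pi * sqrt s))^2 * (4 * (1/(q^2/s^2) + (\<rho> * b / s)/((q^2/s^2) * (q / s)) * T))
      = s/pi^2 * (1/q^2) + s/pi^2 * (\<rho> * b / (q^2 * q)) * T"
      unfolding k using s0 by (simp add: field_simps power2_eq_square)
  qed
  have Eq: "E = (sqrt E)^2" using E0 by simp
  show "(1/(2*pi * sqrt s))^2 * (4 * (1/(al*ga-be^2) + be/((al*ga-be^2) * sqrt(al*ga-be^2)) * arctan(be/sqrt(al*ga-be^2))))
      = ratio_density \<rho> (z1, z2)"
  proof -
    define q where "q = sqrt E"
    define T where "T = arctan (\<rho> * b / sqrt E)"
    have q0: "q > 0" using E0 unfolding q_def by simp
    have Eq2: "E = q^2" using E0 unfolding q_def by simp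
    have be2: "be = \<rho> * b / s" unfolding be_def b_def ..
    show ?thesis
      unfolding rd bD
      unfolding sD
      unfolding D
      unfolding T_def[symmetric] q_def[symmetric] be2
      unfolding Eq2
      by (rule gen[OF q0])
  qed
qed
lemma meas_ratio:
  fixes \<rho> :: real
  assumes r: "-1 < \<rho>" "\<rho> < 1"
  shows "(\<lambda>z. ennreal (ratio_density \<rho> z)) \<in> borel_measurable (lborel \<Otimes>\<^sub>M lborel)"
proof -
  define s where "s = 1 - \<rho>^2"
  let ?al = "\<lambda>z::real\<times>real. (1 + (fst z)^2) / s" and ?be = "\<lambda>z::real\<times>real. \<rho> * (1 + fst z * snd z) / s"
    and ?ga = "\<lambda>z::real\<times>real. (1 + (snd z)^2) / s"
  have eq: "ratio_density \<rho> z = (1/(2*pi * sqrt s))^2 * (4 * (1/(?al z * ?ga z - (?be z)^2) + ?be z/((?al z * ?ga z - (?be z)^2) * sqrt(?al z * ?ga z - (?be z)^2)) * arctan(?be z/sqrt(?al z * ?ga z - (?be z)^2))))" for z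
    using ratio_alg(3)[OF r, of "fst z" "snd z"] unfolding s_def by simp
  show ?thesis unfolding eq by measurable
qed
lemma ratio_key:
  fixes \<rho> z1 z2 :: real
  assumes r: "-1 < \<rho>" "\<rho> < 1"
  shows "(\<integral>\<^sup>+y. ennreal (\<bar>fst y * snd y\<bar> * binormal_density \<rho> (fst y * z1, snd y * z2) * binormal_density \<rho> y) \<partial>(lborel \<Otimes>\<^sub>M lborel))
     = ennreal (ratio_density \<rho> (z1, z2))"
proof -
  define s where "s = 1 - \<rho>^2"
  define al where "al = (1 + z1^2) / s"
  define be where "be = \<rho> * (1 + z1*z2) / s"
  define ga where "ga = (1 + z2^2) / s"
  define k where "k = (1/(2*pi * sqrt s))^2"
  have "\<rho>^2 < 1" using r by (simp add: abs_square_less_1)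
  then have s0: "s > 0" unfolding s_def by simp
  have pw: "\<bar>y1 * y2\<bar> * binormal_density \<rho> (y1 * z1, y2 * z2) * binormal_density \<rho> (y1, y2)
      = k * (\<bar>y1*y2\<bar> * exp (-(al*y1^2 - 2*be*y1*y2 + ga*y2^2)/2))" for y1 y2
  proof -
    have ex: "exp (- ((y1*z1)^2 - 2*\<rho>*(y1*z1)*(y2*z2) + (y2*z2)^2) / (2 * s)) * exp (- (y1^2 - 2*\<rho>*y1*y2 + y2^2) / (2 * s))
        = exp (-(al*y1^2 - 2*be*y1*y2 + ga*y2^2)/2)"
      unfolding exp_add[symmetric] al_def be_def ga_def using s0
      by (intro arg_cong[where f=exp]) (simp add: field_simps power2_eq_square)
    show ?thesis
      unfolding binormal_density_def Let_def fst_conv snd_conv s_def[symmetric] k_def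
      using ex by (simp add: power2_eq_square field_simps)
  qed
  have "(\<integral>\<^sup>+y. ennreal (\<bar>fst y * snd y\<bar> * binormal_density \<rho> (fst y * z1, snd y * z2) * binormal_density \<rho> y) \<partial>(lborel \<Otimes>\<^sub>M lborel))
     = (\<integral>\<^sup>+y1. \<integral>\<^sup>+y2. ennreal (\<bar>y1 * y2\<bar> * binormal_density \<rho> (y1 * z1, y2 * z2) * binormal_density \<rho> (y1, y2)) \<partial>lborel \<partial>lborel)"
    by (subst lborel.nn_integral_fst[symmetric]) (simp_all add: measurable_split_conv, measurable)
  also have "\<dots> = (\<integral>\<^sup>+y1. \<integral>\<^sup>+y2. ennreal k * ennreal (\<bar>y1*y2\<bar> * exp (-(al*y1^2 - 2*be*y1*y2 + ga*y2^2)/2)) \<partial>lborel \<partial>lborel)"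
    unfolding pw using s0 by (simp add: ennreal_mult k_def)
  also have "\<dots> = (\<integral>\<^sup>+y1. ennreal k * \<integral>\<^sup>+y2. ennreal (\<bar>y1*y2\<bar> * exp (-(al*y1^2 - 2*be*y1*y2 + ga*y2^2)/2)) \<partial>lborel \<partial>lborel)"
    by (intro nn_integral_cong nn_integral_cmult) measurable
  also have "\<dots> = ennreal k * (\<integral>\<^sup>+y1. \<integral>\<^sup>+y2. ennreal (\<bar>y1*y2\<bar> * exp (-(al*y1^2 - 2*be*y1*y2 + ga*y2^2)/2)) \<partial>lborel \<partial>lborel)"
    by (rule nn_integral_cmult) measurable
  also have "\<dots> = ennreal k * ennreal (4 * (1/(al*ga-be^2) + be/((al*ga-be^2) * sqrt(al*ga-be^2)) * arctan(be/sqrt(al*ga-be^2))))"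
    using gauss_key[of ga al be] ratio_alg(1)[OF r, of z2] ratio_alg(2)[OF r, of z1 z2] unfolding al_def be_def ga_def s_def by simp
  also have "\<dots> = ennreal (k * (4 * (1/(al*ga-be^2) + be/((al*ga-be^2) * sqrt(al*ga-be^2)) * arctan(be/sqrt(al*ga-be^2)))))"
    by (rule ennreal_mult'[symmetric]) (simp add: k_def)
  also have "\<dots> = ennreal (ratio_density \<rho> (z1, z2))"
    using ratio_alg(3)[OF r, of z1 z2] unfolding al_def be_def ga_def s_def k_def by simp
  finally show ?thesis .
qed
lemma scale2:
  fixes f :: "real \<times> real \<Rightarrow> ennreal"
  assumes fm[measurable]: "f \<in> borel_measurable (lborel \<Otimes>\<^sub>M lborel)" and y1: "y1 \<noteq> 0" and y2: "y2 \<noteq> 0"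
  shows "(\<integral>\<^sup>+x. f x \<partial>(lborel \<Otimes>\<^sub>M lborel)) = ennreal \<bar>y1\<bar> * ennreal \<bar>y2\<bar> * (\<integral>\<^sup>+z. f (y1 * fst z, y2 * snd z) \<partial>(lborel \<Otimes>\<^sub>M lborel))"
proof -
  have "(\<integral>\<^sup>+x. f x \<partial>(lborel \<Otimes>\<^sub>M lborel)) = (\<integral>\<^sup>+x1. \<integral>\<^sup>+x2. f (x1, x2) \<partial>lborel \<partial>lborel)"
    by (rule lborel.nn_integral_fst[symmetric]) measurable
  also have "\<dots> = (\<integral>\<^sup>+x1. ennreal \<bar>y2\<bar> * \<integral>\<^sup>+z2. f (x1, 0 + y2 * z2) \<partial>lborel \<partial>lborel)"
    by (intro nn_integral_cong nn_integral_real_affine[OF _ y2]) measurable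
  also have "\<dots> = ennreal \<bar>y2\<bar> * (\<integral>\<^sup>+x1. \<integral>\<^sup>+z2. f (x1, y2 * z2) \<partial>lborel \<partial>lborel)"
    by (subst nn_integral_cmult) (simp_all, measurable)
  also have "(\<integral>\<^sup>+x1. \<integral>\<^sup>+z2. f (x1, y2 * z2) \<partial>lborel \<partial>lborel) = ennreal \<bar>y1\<bar> * (\<integral>\<^sup>+z1. \<integral>\<^sup>+z2. f (0 + y1 * z1, y2 * z2) \<partial>lborel \<partial>lborel)"
    by (rule nn_integral_real_affine[OF _ y1]) measurable
  also have "(\<integral>\<^sup>+z1. \<integral>\<^sup>+z2. f (0 + y1 * z1, y2 * z2) \<partial>lborel \<partial>lborel) = (\<integral>\<^sup>+z. f (y1 * fst z, y2 * snd z) \<partial>(lborel \<Otimes>\<^sub>M lborel))"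
    by (simp, rule lborel.nn_integral_fst[where f="\<lambda>z. f (y1 * fst z, y2 * snd z)", simplified]) measurable
  finally show ?thesis by (simp add: ac_simps)
qed

lemma pair_AE_cong:
  fixes F G :: "real \<times> real \<Rightarrow> ennreal"
  assumes [measurable]: "F \<in> borel_measurable (lborel \<Otimes>\<^sub>M lborel)" "G \<in> borel_measurable (lborel \<Otimes>\<^sub>M lborel)"
  assumes eq: "\<And>a b. a \<noteq> 0 \<Longrightarrow> b \<noteq> 0 \<Longrightarrow> F (a, b) = G (a, b)"
  shows "(\<integral>\<^sup>+y. F y \<partial>(lborel \<Otimes>\<^sub>M lborel)) = (\<integral>\<^sup>+y. G y \<partial>(lborel \<Otimes>\<^sub>M lborel))"
proof -
  have "(\<integral>\<^sup>+y. F y \<partial>(lborel \<Otimes>\<^sub>M lborel)) = (\<integral>\<^sup>+a. \<integral>\<^sup>+b. F (a, b) \<partial>lborel \<partial>lborel)"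
    by (rule lborel.nn_integral_fst[symmetric]) measurable
  also have "\<dots> = (\<integral>\<^sup>+a. \<integral>\<^sup>+b. G (a, b) \<partial>lborel \<partial>lborel)"
  proof (rule nn_integral_cong_AE)
    show "AE a in lborel. (\<integral>\<^sup>+b. F (a, b) \<partial>lborel) = (\<integral>\<^sup>+b. G (a, b) \<partial>lborel)"
      using AE_lborel_singleton[of "0::real"]
    proof (rule AE_mp, intro AE_I2 impI)
      fix a :: real assume a: "a \<noteq> 0"
      show "(\<integral>\<^sup>+b. F (a, b) \<partial>lborel) = (\<integral>\<^sup>+b. G (a, b) \<partial>lborel)"
        using AE_lborel_singleton[of "0::real"]
        by (intro nn_integral_cong_AE) (auto elim!: eventually_mono intro: eq[OF a])
    qed
  qed
  also have "\<dots> = (\<integral>\<^sup>+y. G y \<partial>(lborel \<Otimes>\<^sub>M lborel))"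
    by (rule lborel.nn_integral_fst) measurable
  finally show ?thesis .
qed

lemma binormal_nonneg: "-1 < r \<Longrightarrow> r < 1 \<Longrightarrow> 0 \<le> binormal_density r p"
proof -
  assume r: "-1 < r" "r < 1"
  have "r^2 < 1" using r by (simp add: abs_square_less_1)
  then show ?thesis unfolding binormal_density_def Let_def by simp
qed

lemma main_comp:
  fixes \<rho> :: real
  assumes r: "-1 < \<rho>" "\<rho> < 1"
  assumes A[measurable]: "A \<in> sets (lborel \<Otimes>\<^sub>M lborel :: (real \<times> real) measure)"
  shows "(\<integral>\<^sup>+p. ennreal (binormal_density \<rho> (fst p)) * ennreal (binormal_density \<rho> (snd p))
            * indicator A (fst (fst p) / fst (snd p), snd (fst p) / snd (snd p))
          \<partial>((lborel \<Otimes>\<^sub>M lborel) \<Otimes>\<^sub>M (lborel \<Otimes>\<^sub>M lborel)))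
       = (\<integral>\<^sup>+z. ennreal (ratio_density \<rho> z) * indicator A z \<partial>(lborel \<Otimes>\<^sub>M lborel))"
proof -
  let ?N = "lborel \<Otimes>\<^sub>M lborel :: (real \<times> real) measure"
  have sfN: "sigma_finite_measure ?N"
    by (rule sigma_finite_pair_measure[OF lborel.sigma_finite_measure_axioms lborel.sigma_finite_measure_axioms])
  interpret N: sigma_finite_measure ?N by (rule sfN)
  interpret NN: pair_sigma_finite ?N ?N ..
  let ?H = "\<lambda>x y. ennreal (binormal_density \<rho> x) * ennreal (binormal_density \<rho> y) * indicator A (fst x / fst y, snd x / snd y)"
  let ?K = "\<lambda>y z. ennreal (\<bar>fst y * snd y\<bar> * binormal_density \<rho> (fst y * fst z, snd y * snd z) * binormal_density \<rho> y) * indicator A z"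
  have "(\<integral>\<^sup>+p. ennreal (binormal_density \<rho> (fst p)) * ennreal (binormal_density \<rho> (snd p))
            * indicator A (fst (fst p) / fst (snd p), snd (fst p) / snd (snd p)) \<partial>(?N \<Otimes>\<^sub>M ?N))
      = (\<integral>\<^sup>+y. \<integral>\<^sup>+x. ?H x y \<partial>?N \<partial>?N)"
    by (rule NN.nn_integral_snd[symmetric, where f="\<lambda>p. ?H (fst p) (snd p)", simplified]) measurable
  also have "\<dots> = (\<integral>\<^sup>+y. \<integral>\<^sup>+z. ?K y z \<partial>?N \<partial>?N)"
  proof (rule pair_AE_cong)
    show "(\<lambda>y. \<integral>\<^sup>+x. ?H x y \<partial>?N) \<in> borel_measurable ?N" by measurable
    show "(\<lambda>y. \<integral>\<^sup>+z. ?K y z \<partial>?N) \<in> borel_measurable ?N" by measurable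
    fix a b :: real assume a: "a \<noteq> 0" and b: "b \<noteq> 0"
    have "(\<integral>\<^sup>+x. ?H x (a, b) \<partial>?N) = ennreal \<bar>a\<bar> * ennreal \<bar>b\<bar> * (\<integral>\<^sup>+z. ?H (a * fst z, b * snd z) (a, b) \<partial>?N)"
      by (rule scale2[OF _ a b]) measurable
    also have "\<dots> = (\<integral>\<^sup>+z. ennreal \<bar>a\<bar> * ennreal \<bar>b\<bar> * ?H (a * fst z, b * snd z) (a, b) \<partial>?N)"
      by (rule nn_integral_cmult[symmetric]) measurable
    also have "\<dots> = (\<integral>\<^sup>+z. ?K (a, b) z \<partial>?N)"
    proof (intro nn_integral_cong)
      fix z :: "real \<times> real"
      have n1: "0 \<le> binormal_density \<rho> (a * fst z, b * snd z)" "0 \<le> binormal_density \<rho> (a, b)"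
        using binormal_nonneg[OF r] by auto
      have "ennreal \<bar>a\<bar> * ennreal \<bar>b\<bar> * (ennreal (binormal_density \<rho> (a * fst z, b * snd z)) * ennreal (binormal_density \<rho> (a, b)))
          = ennreal (\<bar>a * b\<bar> * binormal_density \<rho> (a * fst z, b * snd z) * binormal_density \<rho> (a, b))"
        using n1 by (simp add: ennreal_mult abs_mult mult_nonneg_nonneg mult.assoc)
      moreover have "(a * fst z / a, b * snd z / b) = z" using a b by simp
      ultimately show "ennreal \<bar>a\<bar> * ennreal \<bar>b\<bar> * ?H (a * fst z, b * snd z) (a, b) = ?K (a, b) z"
        by (simp del: times_divide_eq_left add: mult.assoc[symmetric])
    qed
    finally show "(\<integral>\<^sup>+x. ?H x (a, b) \<partial>?N) = (\<integral>\<^sup>+z. ?K (a, b) z \<partial>?N)" .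
  qed
  also have "\<dots> = (\<integral>\<^sup>+z. \<integral>\<^sup>+y. ?K y z \<partial>?N \<partial>?N)"
    by (rule NN.Fubini'[where f="\<lambda>y z. ?K y z", symmetric]) measurable
  also have "\<dots> = (\<integral>\<^sup>+z. ennreal (ratio_density \<rho> z) * indicator A z \<partial>?N)"
  proof (intro nn_integral_cong)
    fix z :: "real \<times> real"
    have "(\<integral>\<^sup>+y. ?K y z \<partial>?N) = (\<integral>\<^sup>+y. ennreal (\<bar>fst y * snd y\<bar> * binormal_density \<rho> (fst y * fst z, snd y * snd z) * binormal_density \<rho> y) \<partial>?N) * indicator A z"
      by (rule nn_integral_multc) measurable
    also have "\<dots> = ennreal (ratio_density \<rho> z) * indicator A z"
      using ratio_key[OF r, of "fst z" "snd z"] by simp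
    finally show "(\<integral>\<^sup>+y. ?K y z \<partial>?N) = ennreal (ratio_density \<rho> z) * indicator A z" .
  qed
  finally show ?thesis .
qed

theorem mainTheorem4:
  fixes M :: "'a measure" and \<rho> :: real
    and X1 X2 Y1 Y2 :: "'a \<Rightarrow> real"
  assumes "prob_space M"
    and "-1 < \<rho>" and "\<rho> < 1"
    and "distributed M (lborel \<Otimes>\<^sub>M lborel) (\<lambda>\<omega>. (X1 \<omega>, X2 \<omega>))
           (\<lambda>p. ennreal (binormal_density \<rho> p))"
    and "distributed M (lborel \<Otimes>\<^sub>M lborel) (\<lambda>\<omega>. (Y1 \<omega>, Y2 \<omega>))
           (\<lambda>p. ennreal (binormal_density \<rho> p))"
    and "prob_space.indep_var M (lborel \<Otimes>\<^sub>M lborel) (\<lambda>\<omega>. (X1 \<omega>, X2 \<omega>))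
           (lborel \<Otimes>\<^sub>M lborel) (\<lambda>\<omega>. (Y1 \<omega>, Y2 \<omega>))"
  shows "distributed M (lborel \<Otimes>\<^sub>M lborel) (\<lambda>\<omega>. (X1 \<omega> / Y1 \<omega>, X2 \<omega> / Y2 \<omega>))
           (\<lambda>z. ennreal (ratio_density \<rho> z))"
proof -
  interpret prob_space M by fact
  let ?N = "lborel \<Otimes>\<^sub>M lborel :: (real \<times> real) measure"
  have sfN: "sigma_finite_measure ?N"
    by (rule sigma_finite_pair_measure[OF lborel.sigma_finite_measure_axioms lborel.sigma_finite_measure_axioms])
  have J: "distributed M (?N \<Otimes>\<^sub>M ?N) (\<lambda>\<omega>. ((X1 \<omega>, X2 \<omega>), (Y1 \<omega>, Y2 \<omega>)))
      (\<lambda>(x, y). ennreal (binormal_density \<rho> x) * ennreal (binormal_density \<rho> y))"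
    by (rule distributed_joint_indep[OF sfN sfN assms(4) assms(5) assms(6)])
  define g where "g = (\<lambda>p::(real\<times>real)\<times>(real\<times>real). (fst (fst p) / fst (snd p), snd (fst p) / snd (snd p)))"
  have gm[measurable]: "g \<in> measurable (?N \<Otimes>\<^sub>M ?N) ?N" unfolding g_def by measurable
  have XYm: "(\<lambda>\<omega>. ((X1 \<omega>, X2 \<omega>), (Y1 \<omega>, Y2 \<omega>))) \<in> measurable M (?N \<Otimes>\<^sub>M ?N)"
    using distributed_measurable[OF J] .
  have Zeq: "(\<lambda>\<omega>. (X1 \<omega> / Y1 \<omega>, X2 \<omega> / Y2 \<omega>)) = g \<circ> (\<lambda>\<omega>. ((X1 \<omega>, X2 \<omega>), (Y1 \<omega>, Y2 \<omega>)))"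
    by (simp add: g_def o_def)
  have Zm: "(\<lambda>\<omega>. (X1 \<omega> / Y1 \<omega>, X2 \<omega> / Y2 \<omega>)) \<in> measurable M ?N"
    unfolding Zeq using XYm gm by (rule measurable_comp)
  have rm: "(\<lambda>z. ennreal (ratio_density \<rho> z)) \<in> borel_measurable ?N"
    by (rule meas_ratio[OF assms(2,3)])
  show ?thesis
    unfolding distributed_def
  proof (intro conjI Zm rm)
    show "distr M ?N (\<lambda>\<omega>. (X1 \<omega> / Y1 \<omega>, X2 \<omega> / Y2 \<omega>)) = density ?N (\<lambda>z. ennreal (ratio_density \<rho> z))"
    proof (rule measure_eqI)
      show "sets (distr M ?N (\<lambda>\<omega>. (X1 \<omega> / Y1 \<omega>, X2 \<omega> / Y2 \<omega>))) = sets (density ?N (\<lambda>z. ennreal (ratio_density \<rho> z)))"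
        by simp
      fix A assume "A \<in> sets (distr M ?N (\<lambda>\<omega>. (X1 \<omega> / Y1 \<omega>, X2 \<omega> / Y2 \<omega>)))"
      then have A[measurable]: "A \<in> sets ?N" by simp
      have "emeasure (distr M ?N (\<lambda>\<omega>. (X1 \<omega> / Y1 \<omega>, X2 \<omega> / Y2 \<omega>))) A
          = emeasure M ((\<lambda>\<omega>. (X1 \<omega> / Y1 \<omega>, X2 \<omega> / Y2 \<omega>)) -` A \<inter> space M)"
        by (rule emeasure_distr[OF Zm A])
      also have "(\<lambda>\<omega>. (X1 \<omega> / Y1 \<omega>, X2 \<omega> / Y2 \<omega>)) -` A \<inter> space M
          = (\<lambda>\<omega>. ((X1 \<omega>, X2 \<omega>), (Y1 \<omega>, Y2 \<omega>))) -` (g -` A \<inter> space (?N \<Otimes>\<^sub>M ?N)) \<inter> space M"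
        by (auto simp: g_def space_pair_measure)
      also have "emeasure M \<dots> = (\<integral>\<^sup>+p. (case p of (x, y) \<Rightarrow> ennreal (binormal_density \<rho> x) * ennreal (binormal_density \<rho> y))
            * indicator (g -` A \<inter> space (?N \<Otimes>\<^sub>M ?N)) p \<partial>(?N \<Otimes>\<^sub>M ?N))"
        by (rule distributed_emeasure[OF J]) measurable
      also have "\<dots> = (\<integral>\<^sup>+p. ennreal (binormal_density \<rho> (fst p)) * ennreal (binormal_density \<rho> (snd p))
            * indicator A (fst (fst p) / fst (snd p), snd (fst p) / snd (snd p)) \<partial>(?N \<Otimes>\<^sub>M ?N))"
        by (intro nn_integral_cong) (auto simp: g_def space_pair_measure split: split_indicator)
      also have "\<dots> = (\<integral>\<^sup>+z. ennreal (ratio_density \<rho> z) * indicator A z \<partial>?N)"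
        by (rule main_comp[OF assms(2,3) A])
      also have "\<dots> = emeasure (density ?N (\<lambda>z. ennreal (ratio_density \<rho> z))) A"
        by (rule emeasure_density[OF rm A, symmetric])
      finally show "emeasure (distr M ?N (\<lambda>\<omega>. (X1 \<omega> / Y1 \<omega>, X2 \<omega> / Y2 \<omega>))) A
          = emeasure (density ?N (\<lambda>z. ennreal (ratio_density \<rho> z))) A" .
    qed
  qed
qed

end
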